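(* Let $D$ be a finite set of values, and let $Y$ and $Z$ be finite sets of variables with $Y \cap Z = \emptyset$. Let $w \colon \overline{D^{Y\cup Z}} \to \mathbb{R}$ be a subset-monotone ranking function. Let $R \subseteq \overline{D^Y}$ and $S \subseteq \overline{D^Z}$. If $\tau$ is a maximal element of $R$ with respect to $w$ and $\sigma$ is a maximal element of $S$ with respect to $w$, then $\tau \times \sigma$ is a maximal element of $R \wedge S = \{\tau' \times \sigma' \mid \tau' \in R,\ \sigma' \in S\}$ with respect to $w$.
   Context: For finite sets $D$ (values) and $X$ (variables), a partial assignment is a map $\nu \colon X \to D \cup \{\bot\}$, where $\bot$ means "undefined"; $\overline{D^X}$ denotes the set of partial assignments. Two partial assignments $\tau \in \overline{D^Y}$, $\sigma \in \overline{D^Z}$ with $Y\cap Z=\emptyset$ are disjoint, and $\tau\times\sigma \in \overline{D^{Y\cup Z}}$ is the partial assignment agreeing with $\tau$ on $Y$ and with $\sigma$ on $Z$. A $(D,X)$-ranking function is a function $w \colon \overline{D^X}\to\mathbb{R}$; for $Y \subseteq X$ and $\tau \in \overline{D^Y}$, $w(\tau)$ means $w$ applied to $\tau$ extended by assigning $\bot$ to every variable of $X\setminus Y$. $w$ is subset-monotone if for every $Y \subseteq X$, every $\tau_1,\tau_2 \in \overline{D^Y}$ with $w(\tau_1)\le w(\tau_2)$, and every $\sigma \in \overline{D^{X\setminus Y}}$, we have $w(\sigma\times\tau_1)\le w(\sigma\times\tau_2)$. An element $\tau$ of a set $R$ of partial assignments is maximal with respect to $w$ if $w(\tau') \le w(\tau)$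 for every $\tau' \in R$. *)

theory Defs
  imports Complex_Main
begin

text \<open>A partial assignment over variables X with values D: each variable of X is
  mapped to a value in D (Some d) or to undefined (None, i.e. bottom). Outside X the
  function is None; this is exactly the canonical extension by bottom, so a
  partial assignment over Y \<subseteq> X can be fed directly to a (D,X)-ranking function.\<close>
definition partial_assignments :: "'d set \<Rightarrow> 'x set \<Rightarrow> ('x \<Rightarrow> 'd option) set" where
  "partial_assignments D X =
     {\<nu>. (\<forall>x\<in>X. \<nu> x = None \<or> (\<exists>d\<in>D. \<nu> x = Some d)) \<and> (\<forall>x. x \<notin> X \<longrightarrow> \<nu> x = None)}"

definition pa_prod :: "'x set \<Rightarrow> ('x \<Rightarrow> 'd option) \<Rightarrow> ('x \<Rightarrow> 'd option) \<Rightarrow> ('x \<Rightarrow> 'd option)" where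
  "pa_prod Y \<tau> \<sigma> = (\<lambda>x. if x \<in> Y then \<tau> x else \<sigma> x)"

definition subset_monotone :: "'d set \<Rightarrow> 'x set \<Rightarrow> (('x \<Rightarrow> 'd option) \<Rightarrow> real) \<Rightarrow> bool" where
  "subset_monotone D X w \<longleftrightarrow>
     (\<forall>Y \<subseteq> X. \<forall>\<tau>1 \<in> partial_assignments D Y. \<forall>\<tau>2 \<in> partial_assignments D Y.
        \<forall>\<sigma> \<in> partial_assignments D (X - Y).
          w \<tau>1 \<le> w \<tau>2 \<longrightarrow> w (pa_prod (X - Y) \<sigma> \<tau>1) \<le> w (pa_prod (X - Y) \<sigma> \<tau>2))"

definition is_maximal :: "(('x \<Rightarrow> 'd option) \<Rightarrow> real) \<Rightarrow> ('x \<Rightarrow> 'd option) set \<Rightarrow> ('x \<Rightarrow> 'd option) \<Rightarrow> bool" where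
  "is_maximal w R \<tau> \<longleftrightarrow> \<tau> \<in> R \<and> (\<forall>\<tau>' \<in> R. w \<tau>' \<le> w \<tau>)"

definition pa_join :: "'x set \<Rightarrow> ('x \<Rightarrow> 'd option) set \<Rightarrow> ('x \<Rightarrow> 'd option) set \<Rightarrow> ('x \<Rightarrow> 'd option) set" where
  "pa_join Y R S = {pa_prod Y \<tau>' \<sigma>' | \<tau>' \<sigma>'. \<tau>' \<in> R \<and> \<sigma>' \<in> S}"

end

theory Submission
  imports Defs
begin

lemma swap_prod:
  assumes "Y \<inter> Z = {}" "t \<in> partial_assignments D Y" "s \<in> partial_assignments D Z"
  shows "pa_prod Z s t = pa_prod Y t s"
  using assms unfolding pa_prod_def partial_assignments_def by (auto simp: fun_eq_iff)

theorem lemma2p2: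
  fixes D :: "'d set" and Y Z :: "'x set"
    and w :: "('x \<Rightarrow> 'd option) \<Rightarrow> real"
    and R S :: "('x \<Rightarrow> 'd option) set"
    and \<tau> \<sigma> :: "'x \<Rightarrow> 'd option"
  assumes "finite D" and "finite Y" and "finite Z" and "Y \<inter> Z = {}"
    and "subset_monotone D (Y \<union> Z) w"
    and "R \<subseteq> partial_assignments D Y" and "S \<subseteq> partial_assignments D Z"
    and "is_maximal w R \<tau>" and "is_maximal w S \<sigma>"
  shows "is_maximal w (pa_join Y R S) (pa_prod Y \<tau> \<sigma>)"
proof -
  have t: "\<tau> \<in> R" "\<forall>t\<in>R. w t \<le> w \<tau>" and s: "\<sigma> \<in> S" "\<forall>t\<in>S. w t \<le> w \<sigma>"
    using assms(8,9) unfolding is_maximal_def by auto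
  have d1: "(Y \<union> Z) - Z = Y" and d2: "(Y \<union> Z) - Y = Z" using assms(4) by auto
  have mono: "\<And>Y'. Y' \<subseteq> Y \<union> Z \<Longrightarrow> \<forall>\<tau>1 \<in> partial_assignments D Y'. \<forall>\<tau>2 \<in> partial_assignments D Y'.
        \<forall>\<sigma> \<in> partial_assignments D ((Y \<union> Z) - Y').
          w \<tau>1 \<le> w \<tau>2 \<longrightarrow> w (pa_prod ((Y \<union> Z) - Y') \<sigma> \<tau>1) \<le> w (pa_prod ((Y \<union> Z) - Y') \<sigma> \<tau>2)"
    using assms(5) unfolding subset_monotone_def by blast
  have "\<forall>x\<in>pa_join Y R S. w x \<le> w (pa_prod Y \<tau> \<sigma>)"
  proof
    fix x assume "x \<in> pa_join Y R S"
    then obtain t' s' where x: "x = pa_prod Y t' s'" "t' \<in> R" "s' \<in> S"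
      unfolding pa_join_def by blast
    have t'P: "t' \<in> partial_assignments D Y" and s'P: "s' \<in> partial_assignments D Z"
      and tP: "\<tau> \<in> partial_assignments D Y" and sP: "\<sigma> \<in> partial_assignments D Z"
      using x t s assms(6,7) by auto
    have 1: "w (pa_prod Y t' s') \<le> w (pa_prod Y t' \<sigma>)"
      using mono[of Z] d1 s'P sP t'P s x by auto
    have 2: "w (pa_prod Z \<sigma> t') \<le> w (pa_prod Z \<sigma> \<tau>)"
      using mono[of Y] d2 s'P sP t'P tP t x by auto
    show "w x \<le> w (pa_prod Y \<tau> \<sigma>)"
      using 1 2 swap_prod[OF assms(4) t'P sP] swap_prod[OF assms(4) tP sP] x by simp
  qed
  moreover have "pa_prod Y \<tau> \<sigma> \<in> pa_join Y R S" using t s unfolding pa_join_def by blast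
  ultimately show ?thesis unfolding is_maximal_def by blast
qed

end
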